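(* Let $\mathcal{A}$ be any poset, $H$ a Hilbert space and $(H_a)_{a\in\mathcal{A}}$ an increasing family of closed subspaces of $H$ satisfying the intersection property $\pi(\hat a\cap\hat b)=\pi_a\pi_b$ for all $a,b\in\mathcal A$. For $a\in\mathcal{A}^+$ let $s_a^\perp$ denote the orthogonal projection of $H$ onto $S_a=H_a\cap\bigcap_{b<a}H_b^\perp$ (with $b\in\mathcal A^+$ and $H_1=H$). Then for all $a,b\in\mathcal{A}^+$, $$s_a^\perp s_b^\perp=\delta_a(b)\,s_a^\perp,$$ where $\delta_a(b)=1$ if $a=b$ and $0$ otherwise.
   Context: $\hat a=\{b:b\le a\}$. $\mathcal{A}^{+}$ denotes $\mathcal{A}$ with a new element $1$ strictly greater than all elements of $\mathcal A$; $H_1=H$. For $\mathcal{B}\subseteq\mathcal{A}$, $H(\mathcal{B})$ is the closure of $\sum_{b\in\mathcal{B}}H_b$ (zero if empty), $\pi(\mathcal{B})$ the orthogonal projection onto $H(\mathcal{B})$, and $\pi_a=\pi(\hat a)$ is the orthogonal projection onto $H_a$. *)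

theory Defs
  imports "HOL-Analysis.Analysis"
begin

definition orth_proj :: "'v::{real_inner,complete_space} set \<Rightarrow> 'v \<Rightarrow> 'v" where
  "orth_proj S x = (THE y. y \<in> S \<and> x - y \<in> orthogonal_comp S)"

definition Hsub :: "('a \<Rightarrow> 'v::real_inner set) \<Rightarrow> 'a set \<Rightarrow> 'v set" where
  "Hsub H B = closure (span (\<Union>b\<in>B. H b))"

definition piB :: "('a \<Rightarrow> 'v::{real_inner,complete_space} set) \<Rightarrow> 'a set \<Rightarrow> 'v \<Rightarrow> 'v" where
  "piB H B = orth_proj (Hsub H B)"

text \<open>A^+ is modelled as 'a option: Some a is a in A, None is the new top element 1.
  Strict order of A^+.\<close>
fun plus_less :: "'a::order option \<Rightarrow> 'a option \<Rightarrow> bool" where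
  "plus_less (Some b) (Some a) = (b < a)"
| "plus_less (Some b) None = True"
| "plus_less None _ = False"

fun Hplus :: "('a \<Rightarrow> 'v set) \<Rightarrow> 'a option \<Rightarrow> 'v set" where
  "Hplus H (Some a) = H a"
| "Hplus H None = UNIV"

definition Sset :: "('a::order \<Rightarrow> 'v::real_inner set) \<Rightarrow> 'a option \<Rightarrow> 'v set" where
  "Sset H a = Hplus H a \<inter> (\<Inter>b\<in>{b. plus_less b a}. orthogonal_comp (Hplus H b))"

end

theory Submission
  imports Defs
begin

lemma parallelogram:
  fixes u v :: "'v::real_inner"
  shows "(norm (u+v))^2 + (norm (u-v))^2 = 2*(norm u)^2 + 2*(norm v)^2"
  by (simp add: power2_norm_eq_inner inner_add_left inner_add_right inner_diff_left inner_diff_right inner_commute)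

lemma closed_orthogonal_comp: "closed (orthogonal_comp (S::'v::real_inner set))"
proof -
  have "orthogonal_comp S = (\<Inter>y\<in>S. {x. inner y x = 0})"
    by (auto simp: orthogonal_comp_def orthogonal_def)
  moreover have "closed {x. inner y x = 0}" for y :: 'v
    by (intro closed_Collect_eq continuous_intros)
  ultimately show ?thesis by auto
qed

lemma proj_exists:
  fixes S :: "'v::{real_inner,complete_space} set"
  assumes sub: "subspace S" and cl: "closed S"
  shows "\<exists>y\<in>S. x - y \<in> orthogonal_comp S"
proof -
  define d where "d = Inf ((\<lambda>s. norm (x - s)) ` S)"
  have ne: "(\<lambda>s. norm (x - s)) ` S \<noteq> {}" using subspace_0[OF sub] by auto
  have bdd: "bdd_below ((\<lambda>s. norm (x - s)) ` S)" by (rule bdd_belowI[of _ 0]) auto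
  have dle: "d \<le> norm (x - s)" if "s \<in> S" for s
    unfolding d_def using bdd that by (simp add: cInf_lower)
  have d0: "0 \<le> d" unfolding d_def using ne by (intro cInf_greatest) auto
  have "\<forall>n. \<exists>s\<in>S. norm (x - s) < d + inverse (real (Suc n))"
  proof
    fix n
    have "Inf ((\<lambda>s. norm (x - s)) ` S) < d + inverse (real (Suc n))"
      unfolding d_def[symmetric] by simp
    from cInf_lessD[OF ne this] show "\<exists>s\<in>S. norm (x - s) < d + inverse (real (Suc n))" by auto
  qed
  then obtain s where s: "\<And>n. s n \<in> S" "\<And>n. norm (x - s n) < d + inverse (real (Suc n))"
    by metis
  define e where "e n = inverse (real (Suc n))" for n
  have e0: "0 < e n" for n unfolding e_def by simp
  have bound: "(norm (s m - s n))^2 \<le> 4*d*(e m + e n) + 2*(e m)^2 + 2*(e n)^2" for m n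
  proof -
    have mid: "(1/2) *\<^sub>R (s m + s n) \<in> S"
      using s(1) sub by (simp add: subspace_add subspace_scale)
    have "x - s m + (x - s n) = 2 *\<^sub>R (x - (1/2) *\<^sub>R (s m + s n))"
      by (simp add: algebra_simps scaleR_2)
    hence n1: "norm (x - s m + (x - s n)) = 2 * norm (x - (1/2) *\<^sub>R (s m + s n))" by simp
    have n2: "norm (x - s m - (x - s n)) = norm (s m - s n)" by (simp add: norm_minus_commute)
    have P: "(norm (x - s m + (x - s n)))^2 + (norm (s m - s n))^2
        = 2*(norm (x - s m))^2 + 2*(norm (x - s n))^2"
      using parallelogram[of "x - s m" "x - s n"] n2 by simp
    have A: "2*d \<le> norm (x - s m + (x - s n))" using n1 dle[OF mid] by simp
    have A2: "(2*d)^2 \<le> (norm (x - s m + (x - s n)))^2"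
      using A d0 by (intro power_mono) auto
    have B: "(norm (x - s m))^2 \<le> (d + e m)^2"
      using s(2)[of m] by (intro power_mono) (auto simp: e_def)
    have C: "(norm (x - s n))^2 \<le> (d + e n)^2"
      using s(2)[of n] by (intro power_mono) (auto simp: e_def)
    have "(norm (s m - s n))^2 \<le> 2*(d + e m)^2 + 2*(d + e n)^2 - (2*d)^2"
      using P A2 B C by linarith
    also have "\<dots> = 4*d*(e m + e n) + 2*(e m)^2 + 2*(e n)^2"
      by (simp add: power2_eq_square algebra_simps)
    finally show ?thesis .
  qed
  have "Cauchy s"
  proof (rule metric_CauchyI)
    fix r :: real assume r: "0 < r"
    define \<delta> where "\<delta> = min 1 (r^2 / (8*d + 8))"
    have dpos: "0 < \<delta>" using r d0 by (simp add: \<delta>_def)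
    obtain N where N: "inverse (real (Suc N)) < \<delta>"
      using reals_Archimedean[OF dpos] by blast
    have "dist (s m) (s n) < r" if "N \<le> m" "N \<le> n" for m n
    proof -
      have em: "e m \<le> \<delta>"
      proof -
        have "e m \<le> e N" unfolding e_def using that(1) by (intro le_imp_inverse_le) auto
        thus ?thesis using N unfolding e_def by linarith
      qed
      have en: "e n \<le> \<delta>"
      proof -
        have "e n \<le> e N" unfolding e_def using that(2) by (intro le_imp_inverse_le) auto
        thus ?thesis using N unfolding e_def by linarith
      qed
      have d1: "\<delta> \<le> 1" by (simp add: \<delta>_def)
      have "\<delta> \<le> r^2 / (8*d+8)" by (simp add: \<delta>_def)
      hence d2: "\<delta> * (8*d+8) \<le> r^2" using d0 by (simp add: pos_le_divide_eq)
      have "(e m)^2 \<le> \<delta>"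
      proof -
        have "e m * e m \<le> \<delta> * 1" using em e0[of m] d1 by (intro mult_mono) auto
        thus ?thesis by (simp add: power2_eq_square)
      qed
      moreover have "(e n)^2 \<le> \<delta>"
      proof -
        have "e n * e n \<le> \<delta> * 1" using en e0[of n] d1 by (intro mult_mono) auto
        thus ?thesis by (simp add: power2_eq_square)
      qed
      moreover have "d*(e m + e n) \<le> d*(2*\<delta>)" using em en d0
        by (intro mult_left_mono) auto
      ultimately have "(norm (s m - s n))^2 \<le> 8*d*\<delta> + 4*\<delta>"
        using bound[of m n] by linarith
      also have "\<dots> < \<delta> * (8*d+8)" using dpos by (simp add: algebra_simps)
      finally have "(norm (s m - s n))^2 < r^2" using d2 by linarith
      hence "norm (s m - s n) < r" using r by (simp add: power_less_imp_less_base)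
      thus ?thesis by (simp add: dist_norm)
    qed
    thus "\<exists>N. \<forall>m\<ge>N. \<forall>n\<ge>N. dist (s m) (s n) < r" by blast
  qed
  then obtain y where lim: "s \<longlonglongrightarrow> y" using Cauchy_convergent_iff convergent_def by blast
  have yS: "y \<in> S" using closed_sequentially[OF cl] s(1) lim by blast
  have "norm (x - y) \<le> d"
  proof (rule LIMSEQ_le)
    show "(\<lambda>n. norm (x - s n)) \<longlonglongrightarrow> norm (x - y)"
      by (intro tendsto_intros lim)
    show "(\<lambda>n. d + inverse (real (Suc n))) \<longlonglongrightarrow> d"
      using tendsto_add[OF tendsto_const LIMSEQ_inverse_real_of_nat, of d] by simp
    show "\<exists>N. \<forall>n\<ge>N. norm (x - s n) \<le> d + inverse (real (Suc n))"
      using s(2) less_imp_le by blast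
  qed
  hence ymin: "norm (x - y) \<le> norm (x - z)" if "z \<in> S" for z using dle[OF that] by linarith
  have "x - y \<in> orthogonal_comp S"
    unfolding orthogonal_comp_def orthogonal_def
  proof (safe)
    fix z assume z: "z \<in> S"
    define w where "w = x - y"
    show "inner z (x - y) = 0"
    proof (cases "z = 0")
      case True thus ?thesis by simp
    next
      case False
      define t where "t = inner w z / inner z z"
      have zz: "0 < inner z z" using False by simp
      have "y + t *\<^sub>R z \<in> S" using yS z sub by (simp add: subspace_add subspace_scale)
      from ymin[OF this] have "norm w \<le> norm (w - t *\<^sub>R z)" by (simp add: w_def algebra_simps)
      hence "(norm w)^2 \<le> (norm (w - t *\<^sub>R z))^2" by (simp add: power_mono)
      hence "inner w w \<le> inner w w - 2*t*inner w z + t*t*inner z z"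
        by (simp add: power2_norm_eq_inner inner_diff_left inner_diff_right inner_commute algebra_simps)
      hence "0 \<le> - 2*t*inner w z + t*t*inner z z" by linarith
      also have "t*t*inner z z = t * inner w z" using zz by (simp add: t_def)
      finally have "0 \<le> - (inner w z * inner w z) / inner z z"
        by (simp add: t_def)
      hence "inner w z * inner w z \<le> 0" using zz by (simp add: divide_le_0_iff)
      hence "inner w z = 0" using zero_le_square[of "inner w z"] by (smt (verit) mult_eq_0_iff)
      thus ?thesis by (simp add: w_def inner_commute)
    qed
  qed
  with yS show ?thesis by blast
qed

lemma orth_proj_spec:
  fixes S :: "'v::{real_inner,complete_space} set"
  assumes sub: "subspace S" and cl: "closed S"
  shows "orth_proj S x \<in> S \<and> x - orth_proj S x \<in> orthogonal_comp S"
proof -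
  obtain y where y: "y \<in> S" "x - y \<in> orthogonal_comp S" using proj_exists[OF sub cl] by blast
  have uniq: "z = y" if "z \<in> S \<and> x - z \<in> orthogonal_comp S" for z
  proof -
    have "z - y \<in> S" using that y sub by (simp add: subspace_diff)
    moreover have "(x - y) - (x - z) \<in> orthogonal_comp S"
      using subspace_diff[OF subspace_orthogonal_comp, of "x - y" S "x - z"] that y by blast
    hence "z - y \<in> orthogonal_comp S" by simp
    ultimately have "inner (z - y) (z - y) = 0" by (auto simp: orthogonal_comp_def orthogonal_def)
    thus ?thesis by simp
  qed
  have "orth_proj S x = y" unfolding orth_proj_def
    using y uniq by (intro the_equality) blast+
  thus ?thesis using y by simp
qed

lemma orth_proj_unique:
  fixes S :: "'v::{real_inner,complete_space} set"
  assumes sub: "subspace S" and y: "y \<in> S" "x - y \<in> orthogonal_comp S"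
  shows "orth_proj S x = y"
proof -
  have uniq: "z = y" if "z \<in> S \<and> x - z \<in> orthogonal_comp S" for z
  proof -
    have "z - y \<in> S" using that y sub by (simp add: subspace_diff)
    moreover have "(x - y) - (x - z) \<in> orthogonal_comp S"
      using subspace_diff[OF subspace_orthogonal_comp, of "x - y" S "x - z"] that y by blast
    hence "z - y \<in> orthogonal_comp S" by simp
    ultimately have "inner (z - y) (z - y) = 0" by (auto simp: orthogonal_comp_def orthogonal_def)
    thus ?thesis by simp
  qed
  show ?thesis unfolding orth_proj_def
    using y uniq by (intro the_equality) blast+
qed

lemma orth_comp_closure_span:
  assumes "y \<in> orthogonal_comp U"
  shows "y \<in> orthogonal_comp (closure (span U))"
proof -
  have "span U \<subseteq> {z. inner z y = 0}"
  proof
    fix z assume "z \<in> span U"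
    moreover have "\<And>u. u \<in> U \<Longrightarrow> orthogonal y u" using assms
      by (simp add: orthogonal_comp_def orthogonal_def inner_commute)
    ultimately have "orthogonal y z" by (rule orthogonal_to_span)
    thus "z \<in> {z. inner z y = 0}" by (simp add: orthogonal_def inner_commute)
  qed
  moreover have "closed {z. inner z y = 0}" by (intro closed_Collect_eq continuous_intros)
  ultimately have "closure (span U) \<subseteq> {z. inner z y = 0}" by (rule closure_minimal)
  thus ?thesis by (auto simp: orthogonal_comp_def orthogonal_def)
qed

lemma Hsub_down:
  fixes H :: "'a::order \<Rightarrow> 'v::real_inner set"
  assumes closed_sub: "\<And>a. subspace (H a) \<and> closed (H a)"
    and incr: "\<And>a b. a \<le> b \<Longrightarrow> H a \<subseteq> H b"
  shows "Hsub H {x. x \<le> a} = H a"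
proof -
  have "(\<Union>b\<in>{x. x \<le> a}. H b) = H a"
  proof
    show "(\<Union>b\<in>{x. x \<le> a}. H b) \<subseteq> H a" using incr by (intro UN_least) simp
    show "H a \<subseteq> (\<Union>b\<in>{x. x \<le> a}. H b)" by blast
  qed
  moreover have "span (H a) = H a" using closed_sub[of a] by (simp only: span_eq_iff)
  ultimately show ?thesis unfolding Hsub_def using closed_sub[of a] closure_closed[of "H a"] by metis
qed

lemma Sset_sub: "Sset H a \<subseteq> Hplus H a" by (auto simp: Sset_def)

lemma Sset_closed_sub:
  fixes H :: "'a::order \<Rightarrow> 'v::real_inner set"
  assumes closed_sub: "\<And>a. subspace (H a) \<and> closed (H a)"
  shows "subspace (Sset H a) \<and> closed (Sset H a)"
proof -
  have h: "subspace (Hplus H a) \<and> closed (Hplus H a)"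
  proof (cases a)
    case None thus ?thesis by simp
  next
    case (Some a') thus ?thesis using closed_sub[of a'] by simp
  qed
  have "subspace (\<Inter>b\<in>{b. plus_less b a}. orthogonal_comp (Hplus H b))"
    by (intro subspace_Int subspace_orthogonal_comp)
  moreover have "closed (\<Inter>b\<in>{b. plus_less b a}. orthogonal_comp (Hplus H b))"
    by (rule closed_INT) (simp add: closed_orthogonal_comp)
  ultimately show ?thesis using h unfolding Sset_def by (simp add: subspace_inter closed_Int)
qed

lemma subspace_closure_own:
  fixes S :: "'v::real_normed_vector set"
  assumes S: "subspace S"
  shows "subspace (closure S)"
proof (rule subspaceI)
  show "0 \<in> closure S" using subspace_0[OF S] closure_subset by blast
next
  fix x y assume x: "x \<in> closure S" and y: "y \<in> closure S"
  obtain f where f: "\<forall>n. f n \<in> S" "f \<longlonglongrightarrow> x" using x unfolding closure_sequential by blast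
  obtain g where g: "\<forall>n. g n \<in> S" "g \<longlonglongrightarrow> y" using y unfolding closure_sequential by blast
  have "\<forall>n. f n + g n \<in> S" using f g S by (simp add: subspace_add)
  moreover have "(\<lambda>n. f n + g n) \<longlonglongrightarrow> x + y" using f g by (intro tendsto_add) auto
  ultimately show "x + y \<in> closure S" unfolding closure_sequential by (intro exI[of _ "\<lambda>n. f n + g n"]) simp
next
  fix c :: real and x assume x: "x \<in> closure S"
  obtain f where f: "\<forall>n. f n \<in> S" "f \<longlonglongrightarrow> x" using x unfolding closure_sequential by blast
  have "\<forall>n. c *\<^sub>R f n \<in> S" using f S by (simp add: subspace_scale)
  moreover have "(\<lambda>n. c *\<^sub>R f n) \<longlonglongrightarrow> c *\<^sub>R x" using f by (intro tendsto_scaleR) auto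
  ultimately show "c *\<^sub>R x \<in> closure S" unfolding closure_sequential by (intro exI[of _ "\<lambda>n. c *\<^sub>R f n"]) simp
qed

lemma Sset_orth:
  fixes H :: "'a::order \<Rightarrow> 'v::{real_inner,complete_space} set"
  assumes closed_sub: "\<And>a. subspace (H a) \<and> closed (H a)"
    and incr: "\<And>a b. a \<le> b \<Longrightarrow> H a \<subseteq> H b"
    and inter: "\<And>a b. piB H ({x. x \<le> a} \<inter> {x. x \<le> b})
                        = piB H {x. x \<le> a} \<circ> piB H {x. x \<le> b}"
    and ne: "a \<noteq> b" and x: "x \<in> Sset H a" and y: "y \<in> Sset H b"
  shows "inner x y = 0"
proof (cases "plus_less b a")
  case True
  hence "x \<in> orthogonal_comp (Hplus H b)" using x by (auto simp: Sset_def)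
  moreover have "y \<in> Hplus H b" using y by (auto simp: Sset_def)
  ultimately show ?thesis by (auto simp: orthogonal_comp_def orthogonal_def inner_commute)
next
  case F1: False
  show ?thesis
  proof (cases "plus_less a b")
    case True
    hence "y \<in> orthogonal_comp (Hplus H a)" using y by (auto simp: Sset_def)
    moreover have "x \<in> Hplus H a" using x by (auto simp: Sset_def)
    ultimately show ?thesis by (auto simp: orthogonal_comp_def orthogonal_def)
  next
    case F2: False
    obtain a' b' where ab: "a = Some a'" "b = Some b'"
      using F1 F2 ne by (cases a; cases b) auto
    have nl: "\<not> a' < b'" "\<not> b' < a'" "a' \<noteq> b'" using F1 F2 ne ab by auto
    have xa: "x \<in> H a'" using x ab by (auto simp: Sset_def)
    have yb: "y \<in> H b'" using y ab by (auto simp: Sset_def)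
    have yperp: "y \<in> orthogonal_comp (H c)" if "c < b'" for c
    proof -
      have "y \<in> (\<Inter>b\<in>{b. plus_less b (Some b')}. orthogonal_comp (Hplus H b))"
        using y ab by (simp add: Sset_def)
      moreover have "Some c \<in> {b. plus_less b (Some b')}" using that by simp
      ultimately have "y \<in> orthogonal_comp (Hplus H (Some c))" by blast
      thus ?thesis by simp
    qed
    have p1: "piB H {x. x \<le> b'} y = y"
      unfolding piB_def Hsub_down[of H, OF closed_sub incr]
      using closed_sub[of b'] yb subspace_0[OF subspace_orthogonal_comp]
      by (intro orth_proj_unique) (auto simp: Hsub_down[of H, OF closed_sub incr])
    have "y \<in> orthogonal_comp (\<Union>c\<in>{x. x \<le> a'} \<inter> {x. x \<le> b'}. H c)"
    proof -
      have "c < b'" if "c \<le> a'" "c \<le> b'" for c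
        using that nl by (metis order.order_iff_strict)
      thus ?thesis using yperp by (auto simp: orthogonal_comp_def)
    qed
    hence yp2: "y \<in> orthogonal_comp (Hsub H ({x. x \<le> a'} \<inter> {x. x \<le> b'}))"
      unfolding Hsub_def by (rule orth_comp_closure_span)
    have p2: "piB H ({x. x \<le> a'} \<inter> {x. x \<le> b'}) y = 0"
      unfolding piB_def
    proof (rule orth_proj_unique)
      show "subspace (Hsub H ({x. x \<le> a'} \<inter> {x. x \<le> b'}))"
        unfolding Hsub_def by (intro subspace_closure_own subspace_span)
      show "0 \<in> Hsub H ({x. x \<le> a'} \<inter> {x. x \<le> b'})"
        unfolding Hsub_def using span_0 closure_subset by blast
      show "y - 0 \<in> orthogonal_comp (Hsub H ({x. x \<le> a'} \<inter> {x. x \<le> b'}))"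
        using yp2 by simp
    qed
    have "orth_proj (H a') y = 0"
      using fun_cong[OF inter[of a' b'], of y] p1 p2
      by (simp add: piB_def Hsub_down[of H, OF closed_sub incr])
    hence "y \<in> orthogonal_comp (H a')"
      using orth_proj_spec[of "H a'" y] closed_sub[of a'] by simp
    thus ?thesis using xa by (auto simp: orthogonal_comp_def orthogonal_def)
  qed
qed

theorem lemma3p5:
  fixes H :: "'a::order \<Rightarrow> 'v::{real_inner,complete_space} set"
  assumes closed_sub: "\<And>a. subspace (H a) \<and> closed (H a)"
    and incr: "\<And>a b. a \<le> b \<Longrightarrow> H a \<subseteq> H b"
    and inter: "\<And>a b. piB H ({x. x \<le> a} \<inter> {x. x \<le> b})
                        = piB H {x. x \<le> a} \<circ> piB H {x. x \<le> b}"
  shows "\<forall>a b :: 'a option.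
           orth_proj (Sset H a) \<circ> orth_proj (Sset H b)
             = (if a = b then orth_proj (Sset H a) else (\<lambda>x. 0))"
proof (intro allI ext)
  fix a b :: "'a option" and x :: 'v
  have Sa: "subspace (Sset H a)" "closed (Sset H a)" using Sset_closed_sub[of H, OF closed_sub] by auto
  have Sb: "subspace (Sset H b)" "closed (Sset H b)" using Sset_closed_sub[of H, OF closed_sub] by auto
  have pb: "orth_proj (Sset H b) x \<in> Sset H b" using orth_proj_spec[OF Sb] by blast
  show "(orth_proj (Sset H a) \<circ> orth_proj (Sset H b)) x
        = (if a = b then orth_proj (Sset H a) else (\<lambda>x. 0)) x"
  proof (cases "a = b")
    case True
    have "orth_proj (Sset H a) (orth_proj (Sset H a) x) = orth_proj (Sset H a) x"
      using pb True subspace_0[OF subspace_orthogonal_comp] by (intro orth_proj_unique[OF Sa(1)]) auto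
    thus ?thesis using True by simp
  next
    case False
    have "orth_proj (Sset H b) x \<in> orthogonal_comp (Sset H a)"
      using Sset_orth[OF closed_sub incr inter False _ pb]
      by (auto simp: orthogonal_comp_def orthogonal_def)
    hence "orth_proj (Sset H a) (orth_proj (Sset H b) x) = 0"
      using subspace_0[OF Sa(1)] by (intro orth_proj_unique[OF Sa(1)]) auto
    thus ?thesis using False by simp
  qed
qed

end
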